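(* Let $S_1>0$ and $t>1$, and set $f(S_1)=(t-1)\big(1+(t+1)S_1\big)$. With $R_{DF},R_{CF}$ as defined in the context, for every $S_2\ge 0$: if $S_2>f(S_1)$ then $R_{CF}(S_2)>R_{DF}(S_2)$, and if $S_2\le f(S_1)$ then $R_{DF}(S_2)\ge R_{CF}(S_2)$. Consequently $\max\{R_{DF}(S_2),R_{CF}(S_2)\}$ equals $R_{DF}(S_2)$ for $S_2\le f(S_1)$ and $R_{CF}(S_2)$ for $S_2>f(S_1)$.
   Context: $C(x)=\log_2(1+x)$. For fixed $S_1>0$, $t>0$ and $S_2\ge0$, $$R_{DF}(S_2)=\frac12\max_{0\le\rho\le1}\min\Big\{C(tS_1)+C\big((1-\rho^2)S_1\big),\;C(S_1)+C\big(S_1+S_2+2\rho\sqrt{S_1S_2}\big)\Big\},$$ $$R_{CF}(S_2)=\frac12C(S_1)+\frac12C\Big(S_1+\frac{tS_1S_2}{1+(t+1)S_1+S_2}\Big).$$ These are the DF and CF rates of a half-duplex Gaussian relay channel with source–destination SNR $S_1$, source–relay/source–destination gain ratio $t$, and relay–destination SNR $S_2$. *)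

theory Defs
  imports "HOL-Analysis.Analysis"
begin

definition Cap :: "real \<Rightarrow> real" where
  "Cap x = log 2 (1 + x)"

text \<open>DF rate: the maximum over rho in [0,1] is written as Sup of the (compact, attained) image.\<close>
definition R_DF :: "real \<Rightarrow> real \<Rightarrow> real \<Rightarrow> real" where
  "R_DF S1 t S2 = (1/2) * (SUP \<rho>\<in>{0..1}.
      min (Cap (t * S1) + Cap ((1 - \<rho>^2) * S1))
          (Cap S1 + Cap (S1 + S2 + 2 * \<rho> * sqrt (S1 * S2))))"

definition R_CF :: "real \<Rightarrow> real \<Rightarrow> real \<Rightarrow> real" where
  "R_CF S1 t S2 = (1/2) * Cap S1 + (1/2) * Cap (S1 + t * S1 * S2 / (1 + (t + 1) * S1 + S2))"

definition fthr :: "real \<Rightarrow> real \<Rightarrow> real" where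
  "fthr S1 t = (t - 1) * (1 + (t + 1) * S1)"

end

theory Submission
  imports Defs
begin

lemma Cap_mono: "-1 < x \<Longrightarrow> x \<le> y \<Longrightarrow> Cap x \<le> Cap y"
  unfolding Cap_def by simp

lemma Cap_strict: "-1 < x \<Longrightarrow> x < y \<Longrightarrow> Cap x < Cap y"
  unfolding Cap_def by simp

theorem mainTheorem3:
  fixes S1 t S2 :: real
  assumes "S1 > 0" and "t > 1" and "S2 \<ge> 0"
  shows "(S2 > fthr S1 t \<longrightarrow> R_CF S1 t S2 > R_DF S1 t S2)
       \<and> (S2 \<le> fthr S1 t \<longrightarrow> R_DF S1 t S2 \<ge> R_CF S1 t S2)
       \<and> max (R_DF S1 t S2) (R_CF S1 t S2)
           = (if S2 \<le> fthr S1 t then R_DF S1 t S2 else R_CF S1 t S2)"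
proof -
  define g where "g = (\<lambda>\<rho>::real. min (Cap (t * S1) + Cap ((1 - \<rho>^2) * S1))
          (Cap S1 + Cap (S1 + S2 + 2 * \<rho> * sqrt (S1 * S2))))"
  define D where "D = 1 + (t + 1) * S1 + S2"
  define X where "X = S1 + t * S1 * S2 / D"
  have Dp: "D > 0" using assms unfolding D_def by (simp add: add_pos_nonneg)
  have Xnn: "X \<ge> 0" using assms Dp unfolding X_def by simp
  have RDF: "R_DF S1 t S2 = (1/2) * Sup (g ` {0..1})" unfolding R_DF_def g_def by simp
  have RCF: "R_CF S1 t S2 = (1/2) * Cap S1 + (1/2) * Cap X" unfolding R_CF_def X_def D_def by simp
  have up: "g \<rho> \<le> Cap (t*S1) + Cap S1" if "\<rho> \<in> {0..1}" for \<rho>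
  proof -
    have "\<rho>^2 \<le> 1" using that by (simp add: power_le_one)
    have n: "0 \<le> (1 - \<rho>^2) * S1" using \<open>\<rho>^2 \<le> 1\<close> assms by simp
    have "(1 - \<rho>^2) * S1 \<le> S1" using assms by (simp add: mult_le_cancel_right1)
    hence "Cap ((1 - \<rho>^2) * S1) \<le> Cap S1"
      using n by (intro Cap_mono) auto
    thus ?thesis unfolding g_def by linarith
  qed
  have bdd: "bdd_above (g ` {0..1})" using up by (intro bdd_aboveI2[where M="Cap (t*S1) + Cap S1"]) auto
  have supup: "Sup (g ` {0..1}) \<le> Cap (t*S1) + Cap S1"
    using up by (intro cSUP_least) auto
  have suplo: "g 0 \<le> Sup (g ` {0..1})" using bdd by (intro cSup_upper) auto
  have X1: "X \<le> S1 + S2"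
  proof -
    have "t * S1 \<le> D" using assms unfolding D_def by (simp add: algebra_simps)
    hence "t * S1 * S2 / D \<le> S2" using Dp assms by (simp add: divide_simps) (metis mult.commute mult_right_mono)
    thus ?thesis unfolding X_def by simp
  qed
  have Xiff: "X \<le> t * S1 \<longleftrightarrow> S2 \<le> fthr S1 t"
  proof -
    have "X \<le> t * S1 \<longleftrightarrow> t * S1 * S2 / D \<le> (t - 1) * S1" unfolding X_def by (simp add: algebra_simps)
    also have "\<dots> \<longleftrightarrow> t * S1 * S2 \<le> (t - 1) * S1 * D" using Dp by (simp add: divide_simps)
    also have "\<dots> \<longleftrightarrow> S1 * (t * S2) \<le> S1 * ((t - 1) * D)" by (simp add: algebra_simps)
    also have "\<dots> \<longleftrightarrow> t * S2 \<le> (t - 1) * D" using assms by simp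
    also have "\<dots> \<longleftrightarrow> S2 \<le> fthr S1 t" unfolding D_def fthr_def by (simp add: algebra_simps)
    finally show ?thesis .
  qed
  have A: "S2 > fthr S1 t \<longrightarrow> R_CF S1 t S2 > R_DF S1 t S2"
  proof
    assume "S2 > fthr S1 t"
    hence "t * S1 < X" using Xiff by linarith
    hence "Cap (t*S1) < Cap X" using assms by (intro Cap_strict) (auto, smt (verit) mult_pos_pos)
    thus "R_CF S1 t S2 > R_DF S1 t S2" using supup unfolding RDF RCF by linarith
  qed
  have B: "S2 \<le> fthr S1 t \<longrightarrow> R_DF S1 t S2 \<ge> R_CF S1 t S2"
  proof
    assume "S2 \<le> fthr S1 t"
    hence "X \<le> t * S1" using Xiff by simp
    hence c1: "Cap X \<le> Cap (t*S1)" using Xnn by (intro Cap_mono) auto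
    have c2: "Cap X \<le> Cap (S1 + S2)" using Xnn X1 by (intro Cap_mono) auto
    have "Cap S1 + Cap X \<le> g 0" unfolding g_def using c1 c2 by simp
    thus "R_DF S1 t S2 \<ge> R_CF S1 t S2" using suplo unfolding RDF RCF by linarith
  qed
  show ?thesis using A B by auto
qed

end
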